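(* Let $T$ be an invertible operator in $\mathcal D(\mathcal P_n)$ and let $\Omega$ be a convex circular domain (i.e. an open or closed disk or half-plane) with $Z(T\phi_n)\subset\Omega$. Then $Z(Tf)\subset Z(f)+\Omega$ for all $f\in\mathcal P_n\setminus\{0\}$.
   Context: Let $n\ge 1$ be an integer and $\mathcal P_n$ the complex vector space of polynomials in one complex variable of degree at most $n$; $\phi_k(z)=z^k/k!$. $D$ is differentiation on $\mathcal P_n$, $I$ the identity, and $\mathcal D(\mathcal P_n)$ the linear span of $I,D,\dots,D^n$. For a nonzero $f$, $Z(f)$ is the multiset of roots of $f$ (with multiplicity; empty for nonzero constants). For $A,B\subset\mathbb C$, $A+B=\{u+v:u\in A,v\in B\}$. *)

theory Defs
  imports "HOL-Analysis.Analysis" "HOL-Computational_Algebra.Polynomial"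
begin

definition Pn :: "nat \<Rightarrow> complex poly set" where
  "Pn n = {f. degree f \<le> n}"

definition phi :: "nat \<Rightarrow> complex poly" where
  "phi k = monom (1 / of_nat (fact k)) k"

definition diffop :: "(nat \<Rightarrow> complex) \<Rightarrow> nat \<Rightarrow> complex poly \<Rightarrow> complex poly" where
  "diffop a n f = (\<Sum>k\<le>n. smult (a k) ((pderiv ^^ k) f))"

definition invertible_on_Pn :: "(complex poly \<Rightarrow> complex poly) \<Rightarrow> nat \<Rightarrow> bool" where
  "invertible_on_Pn T n \<longleftrightarrow> bij_betw T (Pn n) (Pn n)"

text \<open>Set of roots (the underlying set of the multiset Z(f)).\<close>
definition Zset :: "complex poly \<Rightarrow> complex set" where
  "Zset f = {z. poly f z = 0}"

definition setsum :: "complex set \<Rightarrow> complex set \<Rightarrow> complex set" where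
  "setsum A B = {u + v | u v. u \<in> A \<and> v \<in> B}"

definition convex_circular_domain :: "complex set \<Rightarrow> bool" where
  "convex_circular_domain \<Omega> \<longleftrightarrow>
     (\<exists>c r. r > 0 \<and> (\<Omega> = ball c r \<or> \<Omega> = cball c r)) \<or>
     (\<exists>u c. u \<noteq> 0 \<and> (\<Omega> = {z. Re (z * cnj u) > c} \<or> \<Omega> = {z. Re (z * cnj u) \<ge> c}))"

end

theory Submission
  imports Defs "HOL-Computational_Algebra.Fundamental_Theorem_Algebra"
begin

definition Qf :: "real \<Rightarrow> complex \<Rightarrow> real \<Rightarrow> complex \<Rightarrow> real" where
  "Qf \<alpha> \<beta> \<gamma> v = \<alpha> * (cmod v)^2 + Re (\<beta> * v) + \<gamma>"

lemma sum_sq_le: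
  fixes v :: "nat \<Rightarrow> complex"
  shows "(cmod (\<Sum>i<N. v i))^2 \<le> of_nat N * (\<Sum>i<N. (cmod (v i))^2)"
proof -
  have "cmod (\<Sum>i<N. v i) \<le> (\<Sum>i<N. cmod (v i))" by (rule norm_sum)
  hence "(cmod (\<Sum>i<N. v i))^2 \<le> (\<Sum>i<N. cmod (v i))^2"
    by (simp add: power_mono)
  also have "\<dots> = (\<Sum>i<N. cmod (v i) * 1)^2" by simp
  also have "\<dots> \<le> (\<Sum>i<N. (cmod (v i))^2) * (\<Sum>i<N. (1::real)^2)"
    by (rule Cauchy_Schwarz_ineq_sum)
  finally show ?thesis by (simp add: mult.commute)
qed

lemma jensenQ:
  fixes v :: "nat \<Rightarrow> complex"
  assumes "\<alpha> \<ge> 0" "N \<ge> 1"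
  shows "of_nat N * Qf \<alpha> \<beta> \<gamma> ((\<Sum>i<N. v i) / of_nat N) \<le> (\<Sum>i<N. Qf \<alpha> \<beta> \<gamma> (v i))"
proof -
  define S where "S = (\<Sum>i<N. v i)"
  have N0: "real N > 0" using assms by simp
  have "of_nat N * Qf \<alpha> \<beta> \<gamma> (S / of_nat N) = \<alpha> * (cmod S)^2 / real N + Re (\<beta> * S) + real N * \<gamma>"
    using N0 by (simp add: Qf_def norm_divide power_divide field_simps power2_eq_square)
  also have "\<dots> \<le> \<alpha> * (\<Sum>i<N. (cmod (v i))^2) + Re (\<beta> * S) + real N * \<gamma>"
  proof -
    have "(cmod S)^2 / real N \<le> (\<Sum>i<N. (cmod (v i))^2)"
      using sum_sq_le[of v N] N0 unfolding S_def by (simp add: divide_le_eq mult.commute)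
    thus ?thesis using assms(1) mult_left_mono[of "(cmod S)^2 / real N" _ \<alpha>] by (simp add: times_divide_eq_right[symmetric] del: times_divide_eq_right)
  qed
  also have "\<dots> = (\<Sum>i<N. Qf \<alpha> \<beta> \<gamma> (v i))"
    by (simp add: Qf_def S_def sum.distrib sum_distrib_left sum_distrib_right Re_sum[symmetric])
  finally show ?thesis unfolding S_def .
qed

lemma sum_neg_lt:
  fixes f :: "nat \<Rightarrow> real"
  assumes "N \<ge> 1" "\<And>i. i < N \<Longrightarrow> f i < 0"
  shows "(\<Sum>i<N. f i) < 0"
proof -
  have "{..<N} \<noteq> {}" using assms(1) lessThan_empty_iff by (metis not_one_le_zero)
  hence "(\<Sum>i<N. f i) < (\<Sum>i<N. (0::real))"
    using assms(2) by (intro sum_strict_mono) auto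
  thus ?thesis by simp
qed

lemma conv_strict:
  fixes r :: "nat \<Rightarrow> complex"
  assumes a0: "\<alpha> \<ge> 0" and g0: "\<gamma> \<ge> 0"
    and char: "\<And>x. x \<noteq> p \<Longrightarrow> (x \<in> K \<longleftrightarrow> Qf \<alpha> \<beta> \<gamma> (1 / (p - x)) < 0)"
    and pK: "p \<notin> K" and N: "N \<ge> 1" and rK: "\<forall>i<N. r i \<in> K"
  shows "(\<Sum>i<N. 1 / (p - r i)) \<noteq> 0 \<and> p - of_nat N / (\<Sum>i<N. 1 / (p - r i)) \<in> K"
proof -
  define S where "S = (\<Sum>i<N. 1 / (p - r i))"
  have rp: "r i \<noteq> p" if "i < N" for i using rK pK that by auto
  have neg: "Qf \<alpha> \<beta> \<gamma> (1 / (p - r i)) < 0" if "i < N" for i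
    using char[OF rp[OF that]] rK that by auto
  have "(\<Sum>i<N. Qf \<alpha> \<beta> \<gamma> (1 / (p - r i))) < 0"
    using N neg by (intro sum_neg_lt) auto
  hence "of_nat N * Qf \<alpha> \<beta> \<gamma> (S / of_nat N) < 0"
    using jensenQ[OF a0 N, of \<beta> \<gamma> "\<lambda>i. 1 / (p - r i)"] unfolding S_def by linarith
  hence Qs: "Qf \<alpha> \<beta> \<gamma> (S / of_nat N) < 0" using N by (simp add: mult_less_0_iff)
  have S0: "S \<noteq> 0"
  proof
    assume "S = 0"
    thus False using Qs g0 by (simp add: Qf_def)
  qed
  have "p - of_nat N / S \<noteq> p" using S0 N by simp
  moreover have "1 / (p - (p - of_nat N / S)) = S / of_nat N" by simp
  ultimately have "p - of_nat N / S \<in> K" using char Qs by metis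
  thus ?thesis using S0 unfolding S_def by simp
qed

lemma conv_nonstrict:
  fixes r :: "nat \<Rightarrow> complex"
  assumes a0: "\<alpha> \<ge> 0" and g0: "\<gamma> > 0 \<or> (\<gamma> = 0 \<and> \<alpha> > 0)"
    and char: "\<And>x. x \<noteq> p \<Longrightarrow> (x \<in> K \<longleftrightarrow> Qf \<alpha> \<beta> \<gamma> (1 / (p - x)) \<le> 0)"
    and pK: "p \<notin> K" and N: "N \<ge> 1" and rK: "\<forall>i<N. r i \<in> K"
  shows "(\<Sum>i<N. 1 / (p - r i)) \<noteq> 0 \<and> p - of_nat N / (\<Sum>i<N. 1 / (p - r i)) \<in> K"
proof -
  define S where "S = (\<Sum>i<N. 1 / (p - r i))"
  have rp: "r i \<noteq> p" if "i < N" for i using rK pK that by auto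
  have neg: "Qf \<alpha> \<beta> \<gamma> (1 / (p - r i)) \<le> 0" if "i < N" for i
    using char[OF rp[OF that]] rK that by auto
  have "(\<Sum>i<N. Qf \<alpha> \<beta> \<gamma> (1 / (p - r i))) \<le> 0"
    using N neg by (intro sum_nonpos) auto
  hence "of_nat N * Qf \<alpha> \<beta> \<gamma> (S / of_nat N) \<le> 0"
    using jensenQ[OF a0 N, of \<beta> \<gamma> "\<lambda>i. 1 / (p - r i)"] unfolding S_def by linarith
  hence Qs: "Qf \<alpha> \<beta> \<gamma> (S / of_nat N) \<le> 0" using N by (simp add: mult_le_0_iff)
  have S0: "S \<noteq> 0"
  proof
    assume S: "S = 0"
    show False
    proof (cases "\<gamma> > 0")
      case True thus False using Qs S by (simp add: Qf_def)
    next
      case False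
      hence g: "\<gamma> = 0" "\<alpha> > 0" using g0 by auto
      have "Re (\<beta> * (1 / (p - r i))) < 0" if "i < N" for i
      proof -
        have "cmod (1 / (p - r i)) > 0" using rp[OF that] by simp
        hence "\<alpha> * (cmod (1 / (p - r i)))^2 > 0" using g by simp
        thus ?thesis using neg[OF that] g by (simp add: Qf_def)
      qed
      hence "(\<Sum>i<N. Re (\<beta> * (1 / (p - r i)))) < 0" using N by (intro sum_neg_lt) auto
      hence "Re (\<beta> * S) < 0" unfolding S_def by (simp add: sum_distrib_left Re_sum)
      thus False using S by simp
    qed
  qed
  have "p - of_nat N / S \<noteq> p" using S0 N by simp
  moreover have "1 / (p - (p - of_nat N / S)) = S / of_nat N" by simp
  ultimately have "p - of_nat N / S \<in> K" using char Qs by metis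
  thus ?thesis using S0 unfolding S_def by simp
qed

lemma normsq_plus1: "(cmod (z + 1))^2 = (cmod z)^2 + 2 * Re z + 1"
  unfolding cmod_power2 by (simp add: power2_eq_square algebra_simps)

lemma ball_key:
  assumes "x \<noteq> p"
  shows "(cmod (c - x))^2 * (cmod (1 / (p - x)))^2 =
         (cmod (c - p))^2 * (cmod (1 / (p - x)))^2 + Re (2 * (c - p) * (1 / (p - x))) + 1"
proof -
  define v where "v = 1 / (p - x)"
  have "(c - x) * v = (c - p) * v + 1" using assms by (simp add: v_def field_simps)
  hence "cmod (c - x) * cmod v = cmod ((c - p) * v + 1)" by (metis norm_mult)
  hence "(cmod (c - x))^2 * (cmod v)^2 = (cmod ((c - p) * v + 1))^2"
    by (metis power_mult_distrib)
  also have "\<dots> = (cmod (c - p))^2 * (cmod v)^2 + Re (2 * (c - p) * v) + 1"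
    using normsq_plus1[of "(c - p) * v"] by (simp add: norm_mult power_mult_distrib mult.assoc) (simp add: algebra_simps)
  finally show ?thesis unfolding v_def .
qed

lemma char_ball:
  assumes "x \<noteq> p" "r > 0"
  shows "(x \<in> ball c r) \<longleftrightarrow> Qf ((cmod (c - p))^2 - r^2) (2 * (c - p)) 1 (1 / (p - x)) < 0"
proof -
  define v where "v = 1 / (p - x)"
  have v0: "(cmod v)^2 > 0" using assms by (simp add: v_def)
  have "x \<in> ball c r \<longleftrightarrow> cmod (c - x) < r" by (simp add: dist_norm)
  also have "\<dots> \<longleftrightarrow> (cmod (c - x))^2 < r^2" using assms
    by (meson norm_ge_zero power_less_imp_less_base power_strict_mono less_imp_le zero_le_numeral pos2)
  also have "\<dots> \<longleftrightarrow> (cmod (c - x))^2 * (cmod v)^2 < r^2 * (cmod v)^2"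
    using v0 by simp
  also have "\<dots> \<longleftrightarrow> Qf ((cmod (c - p))^2 - r^2) (2 * (c - p)) 1 v < 0"
    using ball_key[OF assms(1), of c] unfolding v_def[symmetric] Qf_def left_diff_distrib by linarith
  finally show ?thesis unfolding v_def .
qed

lemma char_cball:
  assumes "x \<noteq> p" "r > 0"
  shows "(x \<in> cball c r) \<longleftrightarrow> Qf ((cmod (c - p))^2 - r^2) (2 * (c - p)) 1 (1 / (p - x)) \<le> 0"
proof -
  define v where "v = 1 / (p - x)"
  have v0: "(cmod v)^2 > 0" using assms by (simp add: v_def)
  have "x \<in> cball c r \<longleftrightarrow> cmod (c - x) \<le> r" by (simp add: dist_norm)
  also have "\<dots> \<longleftrightarrow> (cmod (c - x))^2 \<le> r^2" using assms
    by (metis norm_ge_zero power2_le_imp_le power_mono less_imp_le)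
  also have "\<dots> \<longleftrightarrow> (cmod (c - x))^2 * (cmod v)^2 \<le> r^2 * (cmod v)^2"
    using v0 by simp
  also have "\<dots> \<longleftrightarrow> Qf ((cmod (c - p))^2 - r^2) (2 * (c - p)) 1 v \<le> 0"
    using ball_key[OF assms(1), of c] unfolding v_def[symmetric] Qf_def left_diff_distrib by linarith
  finally show ?thesis unfolding v_def .
qed

lemma hp_key:
  assumes "x \<noteq> p"
  shows "Re ((p - x) * cnj u) * (cmod (1 / (p - x)))^2 = Re (u * (1 / (p - x)))"
proof -
  define w where "w = p - x"
  have w0: "w \<noteq> 0" using assms by (simp add: w_def)
  have ns: "(complex_of_real (cmod w))^2 = w * cnj w" using complex_norm_square[of w] by simp
  have iw: "1 / w = cnj w / of_real ((cmod w)^2)" using w0 by (simp add: ns field_simps)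
  have "Re (u * (1 / w)) = Re (u * cnj w) / (cmod w)^2" by (simp only: iw) (simp add: Re_divide_of_real)
  also have "Re (u * cnj w) = Re (w * cnj u)" by simp
  finally show ?thesis unfolding w_def[symmetric] by (simp add: norm_divide power_divide)
qed

lemma lin1: "(A::real) * m = B \<Longrightarrow> (A * m < (R - c) * m) \<longleftrightarrow> ((c - R) * m + B + 0 < 0)"
  by (auto simp: algebra_simps)
lemma lin2: "(A::real) * m = B \<Longrightarrow> (A * m \<le> (R - c) * m) \<longleftrightarrow> ((c - R) * m + B + 0 \<le> 0)"
  by (auto simp: algebra_simps)

lemma char_hp:
  assumes "x \<noteq> p"
  shows "(x \<in> {z. Re (z * cnj u) > c}) \<longleftrightarrow> Qf (c - Re (p * cnj u)) u 0 (1 / (p - x)) < 0"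
proof -
  define v where "v = 1 / (p - x)"
  have v0: "(cmod v)^2 > 0" using assms by (simp add: v_def)
  have k: "Re ((p - x) * cnj u) * (cmod v)^2 = Re (u * v)" using hp_key[OF assms] by (simp add: v_def)
  have e: "Re (x * cnj u) = Re (p * cnj u) - Re ((p - x) * cnj u)" by (simp add: algebra_simps)
  have "x \<in> {z. Re (z * cnj u) > c} \<longleftrightarrow> Re ((p - x) * cnj u) < Re (p * cnj u) - c" using e by auto
  also have "\<dots> \<longleftrightarrow> Re ((p - x) * cnj u) * (cmod v)^2 < (Re (p * cnj u) - c) * (cmod v)^2"
    using v0 by simp
  also have "\<dots> \<longleftrightarrow> Qf (c - Re (p * cnj u)) u 0 v < 0"
    unfolding Qf_def by (rule lin1[OF k])
  finally show ?thesis unfolding v_def .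
qed

lemma char_chp:
  assumes "x \<noteq> p"
  shows "(x \<in> {z. Re (z * cnj u) \<ge> c}) \<longleftrightarrow> Qf (c - Re (p * cnj u)) u 0 (1 / (p - x)) \<le> 0"
proof -
  define v where "v = 1 / (p - x)"
  have v0: "(cmod v)^2 > 0" using assms by (simp add: v_def)
  have k: "Re ((p - x) * cnj u) * (cmod v)^2 = Re (u * v)" using hp_key[OF assms] by (simp add: v_def)
  have e: "Re (x * cnj u) = Re (p * cnj u) - Re ((p - x) * cnj u)" by (simp add: algebra_simps)
  have "x \<in> {z. Re (z * cnj u) \<ge> c} \<longleftrightarrow> Re ((p - x) * cnj u) \<le> Re (p * cnj u) - c" using e by auto
  also have "\<dots> \<longleftrightarrow> Re ((p - x) * cnj u) * (cmod v)^2 \<le> (Re (p * cnj u) - c) * (cmod v)^2"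
    using v0 by simp
  also have "\<dots> \<longleftrightarrow> Qf (c - Re (p * cnj u)) u 0 v \<le> 0"
    unfolding Qf_def by (rule lin2[OF k])
  finally show ?thesis unfolding v_def .
qed

lemma conv_circ:
  fixes r :: "nat \<Rightarrow> complex"
  assumes K: "convex_circular_domain K"
    and pK: "p \<notin> K" and N: "N \<ge> 1" and rK: "\<forall>i<N. r i \<in> K"
  shows "(\<Sum>i<N. 1 / (p - r i)) \<noteq> 0 \<and> p - of_nat N / (\<Sum>i<N. 1 / (p - r i)) \<in> K"
proof -
  from K consider (b) c r where "r > 0" "K = ball c r" | (cb) c r where "r > 0" "K = cball c r"
    | (h) u c where "u \<noteq> 0" "K = {z. Re (z * cnj u) > c}"
    | (ch) u c where "u \<noteq> 0" "K = {z. Re (z * cnj u) \<ge> c}"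
    unfolding convex_circular_domain_def by blast
  thus ?thesis
  proof cases
    case (b c R)
    have "dist c p \<ge> R" using pK b by auto
    hence a: "(cmod (c - p))^2 - R^2 \<ge> 0" using b
      by (simp add: dist_norm power_mono)
    show ?thesis
      by (rule conv_strict[OF a _ _ pK N rK]) (use b char_ball in auto)
  next
    case (cb c R)
    have "dist c p > R" using pK cb by auto
    hence a: "(cmod (c - p))^2 - R^2 \<ge> 0" using cb
      by (simp add: dist_norm power_mono)
    show ?thesis
      by (rule conv_nonstrict[OF a _ _ pK N rK]) (use cb char_cball in auto)
  next
    case (h u c)
    have a: "c - Re (p * cnj u) \<ge> 0" using pK h by auto
    show ?thesis
      by (rule conv_strict[OF a _ _ pK N rK]) (use h char_hp in auto)
  next
    case (ch u c)
    have a: "c - Re (p * cnj u) > 0" using pK ch by auto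
    show ?thesis
      by (rule conv_nonstrict[OF less_imp_le[OF a] _ _ pK N rK]) (use ch char_chp a in auto)
  qed
qed

lemma logderiv:
  fixes r :: "nat \<Rightarrow> complex"
  assumes "\<forall>i<N. r i \<noteq> z"
  shows "poly (pderiv (\<Prod>i<N. [:-r i, 1:])) z = poly (\<Prod>i<N. [:-r i, 1:]) z * (\<Sum>i<N. 1 / (z - r i))"
  using assms
proof (induction N)
  case 0 thus ?case by simp
next
  case (Suc N)
  have IH: "poly (pderiv (\<Prod>i<N. [:-r i, 1:])) z = poly (\<Prod>i<N. [:-r i, 1:]) z * (\<Sum>i<N. 1 / (z - r i))"
    using Suc by auto
  have nz: "z - r N \<noteq> 0" using Suc.prems by auto
  define Q where "Q = (\<Prod>i<N. [:-r i, 1:])"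
  have e1: "(\<Prod>i<Suc N. [:-r i, 1:]) = Q * [:-r N, 1:]" by (simp add: Q_def)
  have "poly (pderiv (\<Prod>i<Suc N. [:-r i, 1:])) z = poly Q z + (z - r N) * poly (pderiv Q) z"
  proof -
    have d1: "pderiv [:-r N, 1:] = 1" by (simp add: pderiv_pCons)
    show ?thesis unfolding e1 pderiv_mult d1 poly_add poly_mult mult_1_right by simp
  qed
  also have "\<dots> = poly Q z * (z - r N) * (\<Sum>i<Suc N. 1 / (z - r i))"
    using IH nz unfolding Q_def[symmetric] by (simp add: field_simps)
  also have "poly Q z * (z - r N) = poly (\<Prod>i<Suc N. [:-r i, 1:]) z" by (simp only: e1 poly_mult) simp
  finally show ?case .
qed

lemma deriv_facts:
  fixes P :: "complex poly"
  assumes K: "convex_circular_domain K" and d: "degree P \<ge> 1"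
    and roots: "\<forall>z. z \<notin> K \<longrightarrow> poly P z \<noteq> 0" and zK: "z \<notin> K"
  shows "\<exists>S. poly (pderiv P) z = poly P z * S \<and> S \<noteq> 0 \<and> z - of_nat (degree P) / S \<in> K"
proof -
  obtain r where r: "smult (lead_coeff P) (\<Prod>i<degree P. [:-r i, 1:]) = P"
    using complex_poly_decompose' by blast
  define N where "N = degree P"
  have P0: "P \<noteq> 0" using d by auto
  have rK: "\<forall>i<N. r i \<in> K"
  proof (intro allI impI)
    fix i assume "i < N"
    have "poly (\<Prod>i<N. [:-r i, 1:]) (r i) = 0"
      using \<open>i < N\<close> by (force simp: poly_prod prod_zero_iff)
    hence "poly P (r i) = 0" by (subst r[symmetric]) (simp add: N_def)
    thus "r i \<in> K" using roots by blast
  qed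
  have rz: "\<forall>i<N. r i \<noteq> z" using rK zK by auto
  have N1: "N \<ge> 1" using d N_def by simp
  from conv_circ[OF K zK N1 rK] have S: "(\<Sum>i<N. 1 / (z - r i)) \<noteq> 0"
     "z - of_nat N / (\<Sum>i<N. 1 / (z - r i)) \<in> K" by auto
  define c where "c = lead_coeff P"
  define Pi where "Pi = (\<Prod>i<N. [:-r i, 1:])"
  have Pdef: "P = smult c Pi" using r unfolding c_def Pi_def N_def by simp
  have A: "poly (pderiv P) z = c * poly (pderiv Pi) z"
    using Pdef by (metis pderiv_smult poly_smult)
  have B: "c * poly (pderiv Pi) z = (c * poly Pi z) * (\<Sum>i<N. 1 / (z - r i))"
    unfolding Pi_def logderiv[OF rz] by simp
  have C: "c * poly Pi z = poly P z" using Pdef by simp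
  have "poly (pderiv P) z = poly P z * (\<Sum>i<N. 1 / (z - r i))" using A B C by simp
  thus ?thesis using S unfolding N_def by blast
qed

lemma gauss_lucas:
  fixes P :: "complex poly"
  assumes K: "convex_circular_domain K" and d: "degree P \<ge> 1"
    and roots: "\<forall>z. z \<notin> K \<longrightarrow> poly P z \<noteq> 0" and zK: "z \<notin> K"
  shows "poly (pderiv P) z \<noteq> 0"
  using deriv_facts[OF assms] roots zK by auto

lemma laguerre:
  fixes P :: "complex poly"
  assumes K: "convex_circular_domain K" and d: "degree P \<ge> 1"
    and roots: "\<forall>z. z \<notin> K \<longrightarrow> poly P z \<noteq> 0" and zK: "z \<notin> K" and tK: "t \<notin> K"
  shows "of_nat (degree P) * poly P z - (z - t) * poly (pderiv P) z \<noteq> 0"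
proof
  assume eq: "of_nat (degree P) * poly P z - (z - t) * poly (pderiv P) z = 0"
  obtain S where S: "poly (pderiv P) z = poly P z * S" "S \<noteq> 0" "z - of_nat (degree P) / S \<in> K"
    using deriv_facts[OF assms(1-4)] by blast
  have Pz: "poly P z \<noteq> 0" using roots zK by auto
  have "poly P z * (of_nat (degree P) - (z - t) * S) = 0" using eq S(1) by (simp add: algebra_simps)
  hence "of_nat (degree P) = (z - t) * S" using Pz by simp
  hence "z - of_nat (degree P) / S = t" using S(2) by simp
  thus False using S(3) tK by simp
qed

definition Pa :: "(nat \<Rightarrow> complex) \<Rightarrow> nat \<Rightarrow> complex poly" where
  "Pa a n = (\<Sum>k\<le>n. smult (a k) (phi (n - k)))"

definition dval :: "(nat \<Rightarrow> complex) \<Rightarrow> nat \<Rightarrow> complex poly \<Rightarrow> complex \<Rightarrow> complex" where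
  "dval a n f w = (\<Sum>k\<le>n. a k * poly ((pderiv ^^ k) f) w)"

lemma pderiv_phi: "pderiv (phi (Suc m)) = phi m"
proof -
  have F: "(of_nat (fact m) :: complex) \<noteq> 0" by simp
  have S: "(of_nat (Suc m) :: complex) \<noteq> 0" by (rule of_nat_neq_0)
  have e: "of_nat (Suc m) * (1 / of_nat (fact (Suc m))) = (1 / of_nat (fact m) :: complex)"
    unfolding fact_Suc of_nat_mult using F S by (simp del: of_nat_Suc)
  show ?thesis unfolding phi_def pderiv_monom diff_Suc_1 e ..
qed

lemma higher_pderiv_phi: "k \<le> n \<Longrightarrow> (pderiv ^^ k) (phi n) = phi (n - k)"
proof (induction k)
  case 0 thus ?case by simp
next
  case (Suc k)
  hence "(pderiv ^^ k) (phi n) = phi (Suc (n - Suc k))" by (simp add: Suc_diff_Suc)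
  thus ?case by (simp add: pderiv_phi)
qed

lemma diffop_phi: "diffop a n (phi n) = Pa a n"
  unfolding diffop_def Pa_def by (intro sum.cong refl) (simp add: higher_pderiv_phi)

lemma coeff_phi: "coeff (phi m) j = (if m = j then 1 / fact j else 0)"
  by (simp add: phi_def coeff_monom)

lemma coeff_Pa: "coeff (Pa a n) j = (if j \<le> n then a (n - j) / fact j else 0)"
proof -
  have "coeff (Pa a n) j = (\<Sum>k\<le>n. a k * (if n - k = j then 1 / fact j else 0))"
    by (simp add: Pa_def coeff_sum coeff_phi)
  also have "\<dots> = (\<Sum>k\<le>n. if k = n - j \<and> j \<le> n then a k / fact j else 0)"
    by (intro sum.cong refl) auto
  also have "\<dots> = (if j \<le> n then a (n - j) / fact j else 0)"
    by (cases "j \<le> n") (simp_all add: sum.delta)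
  finally show ?thesis .
qed

lemma pderiv_Pa: "pderiv (Pa a (Suc n)) = Pa a n"
proof (rule poly_eqI)
  fix j
  show "coeff (pderiv (Pa a (Suc n))) j = coeff (Pa a n) j"
  proof (cases "j \<le> n")
    case True
    have "of_nat (Suc j) * (a (n - j) / fact (Suc j)) = (a (n - j) / fact j :: complex)"
      by (simp add: fact_Suc field_simps del: of_nat_Suc)
    thus ?thesis using True by (simp add: coeff_pderiv coeff_Pa)
  qed (simp add: coeff_pderiv coeff_Pa)
qed

lemma degree_Pa: assumes "a 0 \<noteq> 0" shows "degree (Pa a n) = n"
proof (rule antisym)
  show "degree (Pa a n) \<le> n" by (rule degree_le) (simp add: coeff_Pa)
  show "n \<le> degree (Pa a n)" by (rule le_degree) (simp add: coeff_Pa assms)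
qed

lemma poly_Pa1: "poly (Pa a 1) x = a 1 + a 0 * x"
  by (simp add: Pa_def phi_def poly_monom)

lemma polar_Pa:
  "Pa (\<lambda>k. t * a k + of_nat (Suc k) * a (Suc k)) n =
   smult (of_nat (Suc n)) (Pa a (Suc n)) - [:-t, 1:] * pderiv (Pa a (Suc n))"
proof (rule poly_eqI)
  fix j
  define a' where "a' = (\<lambda>k. t * a k + of_nat (Suc k) * a (Suc k))"
  have lin: "[:-t, 1:] * p = smult (-t) p + pCons 0 p" for p :: "complex poly"
    by (simp add: mult_pCons_left)
  have R: "coeff (smult (of_nat (Suc n)) (Pa a (Suc n)) - [:-t, 1:] * pderiv (Pa a (Suc n))) j =
        of_nat (Suc n) * coeff (Pa a (Suc n)) j + t * coeff (Pa a n) j - coeff (pCons 0 (Pa a n)) j"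
    unfolding pderiv_Pa lin by (simp only: coeff_diff coeff_add coeff_smult) (simp add: algebra_simps)
  show "coeff (Pa a' n) j = coeff (smult (of_nat (Suc n)) (Pa a (Suc n)) - [:-t, 1:] * pderiv (Pa a (Suc n))) j"
    unfolding R
  proof (cases j)
    case 0
    thus "coeff (Pa a' n) j = of_nat (Suc n) * coeff (Pa a (Suc n)) j + t * coeff (Pa a n) j - coeff (pCons 0 (Pa a n)) j"
      by (simp add: coeff_Pa a'_def)
  next
    case (Suc m)
    show "coeff (Pa a' n) j = of_nat (Suc n) * coeff (Pa a (Suc n)) j + t * coeff (Pa a n) j - coeff (pCons 0 (Pa a n)) j"
    proof (cases "m < n")
      case True
      then obtain d where n: "n = Suc m + d" using less_imp_Suc_add by blast
      have f1: "fact (Suc m) = (of_nat (Suc m) * fact m :: complex)" by (rule fact_Suc)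
      have fm: "(fact m :: complex) \<noteq> 0" by simp
      have s1: "(of_nat (Suc m) :: complex) \<noteq> 0" by (rule of_nat_neq_0)
      have "coeff (Pa a' n) j = (t * a d + of_nat (Suc d) * a (Suc d)) / fact (Suc m)"
        using Suc n by (simp add: coeff_Pa a'_def)
      also have "\<dots> = of_nat (Suc n) * (a (Suc d) / fact (Suc m)) + t * (a d / fact (Suc m)) - a (Suc d) / fact m"
      proof -
        have h1: "a (Suc d) / fact m = of_nat (Suc m) * a (Suc d) / fact (Suc m)"
          unfolding f1 using fm s1 by (simp del: of_nat_Suc)
        have h2: "(of_nat (Suc n) :: complex) = of_nat (Suc d) + of_nat (Suc m)"
          unfolding n by simp
        show ?thesis unfolding h1 h2 by (simp add: diff_divide_distrib add_divide_distrib algebra_simps del: of_nat_Suc)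
      qed
      also have "\<dots> = of_nat (Suc n) * coeff (Pa a (Suc n)) j + t * coeff (Pa a n) j - coeff (pCons 0 (Pa a n)) j"
        using Suc n by (simp add: coeff_Pa Suc_diff_le)
      finally show ?thesis .
    next
      case False
      show ?thesis
      proof (cases "m = n")
        case True
        have f1: "fact (Suc n) = (of_nat (Suc n) * fact n :: complex)" by (rule fact_Suc)
        have fm: "(fact n :: complex) \<noteq> 0" by simp
        have s1: "(of_nat (Suc n) :: complex) \<noteq> 0" by (rule of_nat_neq_0)
        show ?thesis using Suc True fm s1 by (simp add: coeff_Pa f1 del: of_nat_Suc)
      next
        case False
        thus ?thesis using Suc \<open>\<not> m < n\<close> by (simp add: coeff_Pa)
      qed
    qed
  qed
qed

lemma higher_pderiv_deg0: "degree h < m \<Longrightarrow> (pderiv ^^ m) h = 0"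
  by (rule poly_eqI) (simp add: coeff_higher_pderiv coeff_eq_0)

lemma leibniz:
  "(pderiv ^^ k) ([:-z, 1:] * h) = [:-z, 1:] * (pderiv ^^ k) h + smult (of_nat k) ((pderiv ^^ (k - 1)) h)"
proof (induction k)
  case 0 thus ?case by simp
next
  case (Suc k)
  have d1: "pderiv [:-z, 1:] = 1" by (simp add: pderiv_pCons)
  have "(pderiv ^^ Suc k) ([:-z, 1:] * h) = pderiv ([:-z, 1:] * (pderiv ^^ k) h + smult (of_nat k) ((pderiv ^^ (k - 1)) h))"
    using Suc by simp
  also have "\<dots> = [:-z, 1:] * (pderiv ^^ Suc k) h + (pderiv ^^ k) h + smult (of_nat k) ((pderiv ^^ k) h)"
  proof (cases k)
    case 0 thus ?thesis by (simp add: pderiv_add pderiv_mult d1 pderiv_smult pderiv_pCons add_ac)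
  next
    case (Suc k') thus ?thesis by (simp add: pderiv_add pderiv_mult d1 pderiv_smult pderiv_pCons add_ac)
  qed
  also have "\<dots> = [:-z, 1:] * (pderiv ^^ Suc k) h + smult (of_nat (Suc k)) ((pderiv ^^ (Suc k - 1)) h)"
    by (simp add: algebra_simps smult_add_left)
  finally show ?case .
qed

lemma poly_diffop: "poly (diffop a n f) w = dval a n f w"
  by (simp add: diffop_def dval_def poly_sum)

lemma dval_smult: "dval a n (smult c f) w = c * dval a n f w"
  by (simp add: dval_def higher_pderiv_smult sum_distrib_left mult_ac)

lemma dval_deg:
  assumes "degree f \<le> m" "m \<le> n"
  shows "dval a n f w = dval a m f w"
  unfolding dval_def
  by (rule sum.mono_neutral_right) (use assms in \<open>auto simp: higher_pderiv_deg0\<close>)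

lemma dval_step:
  assumes "degree h \<le> n"
  shows "dval a (Suc n) ([:-z, 1:] * h) w =
         dval (\<lambda>k. (w - z) * a k + of_nat (Suc k) * a (Suc k)) n h w"
proof -
  define H where "H k = poly ((pderiv ^^ k) h) w" for k
  have HS: "H (Suc n) = 0" using higher_pderiv_deg0[of h "Suc n"] assms unfolding H_def by simp
  have "dval a (Suc n) ([:-z, 1:] * h) w =
        (\<Sum>k\<le>Suc n. (w - z) * (a k * H k)) + (\<Sum>k\<le>Suc n. a k * of_nat k * H (k - 1))"
  proof -
    have pt: "a k * poly ((pderiv ^^ k) ([:-z, 1:] * h)) w = (w - z) * (a k * H k) + a k * of_nat k * H (k - 1)" for k
      unfolding leibniz H_def by (simp add: algebra_simps)
    show ?thesis unfolding dval_def pt by (rule sum.distrib)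
  qed
  also have "(\<Sum>k\<le>Suc n. (w - z) * (a k * H k)) = (\<Sum>k\<le>n. (w - z) * (a k * H k))"
    using HS by simp
  also have "(\<Sum>k\<le>Suc n. a k * of_nat k * H (k - 1)) = (\<Sum>k\<le>n. a (Suc k) * of_nat (Suc k) * H k)"
    by (subst sum.atMost_Suc_shift) simp
  also have "(\<Sum>k\<le>n. (w - z) * (a k * H k)) + (\<Sum>k\<le>n. a (Suc k) * of_nat (Suc k) * H k) =
     dval (\<lambda>k. (w - z) * a k + of_nat (Suc k) * a (Suc k)) n h w"
    unfolding dval_def H_def by (simp add: sum.distrib[symmetric] algebra_simps)
  finally show ?thesis .
qed

lemma GL_iter:
  assumes K: "convex_circular_domain K" and a0: "a 0 \<noteq> 0"
    and R: "\<forall>z. z \<notin> K \<longrightarrow> poly (Pa a (m + d)) z \<noteq> 0"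
  shows "\<forall>z. z \<notin> K \<longrightarrow> poly (Pa a m) z \<noteq> 0"
  using R
proof (induction d)
  case 0 thus ?case by simp
next
  case (Suc d)
  have "\<forall>z. z \<notin> K \<longrightarrow> poly (Pa a (m + d)) z \<noteq> 0"
  proof (intro allI impI)
    fix z assume "z \<notin> K"
    have "poly (pderiv (Pa a (Suc (m + d)))) z \<noteq> 0"
      by (rule gauss_lucas[OF K]) (use Suc.prems \<open>z \<notin> K\<close> degree_Pa[of a, OF a0] in auto)
    thus "poly (Pa a (m + d)) z \<noteq> 0" by (simp add: pderiv_Pa)
  qed
  thus ?case by (rule Suc.IH)
qed

lemma walsh:
  fixes r :: "nat \<Rightarrow> complex"
  assumes K: "convex_circular_domain K"
  shows "\<forall>a. a 0 \<noteq> 0 \<longrightarrow> (\<forall>z. z \<notin> K \<longrightarrow> poly (Pa a N) z \<noteq> 0) \<longrightarrow> (\<forall>i<N. w - r i \<notin> K)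
      \<longrightarrow> dval a N (\<Prod>i<N. [:-r i, 1:]) w \<noteq> 0"
proof (induction N)
  case 0 show ?case by (simp add: dval_def)
next
  case (Suc N)
  show ?case
  proof (intro allI impI)
    fix a :: "nat \<Rightarrow> complex"
    assume a0: "a 0 \<noteq> 0" and R: "\<forall>z. z \<notin> K \<longrightarrow> poly (Pa a (Suc N)) z \<noteq> 0"
      and W: "\<forall>i<Suc N. w - r i \<notin> K"
    define t where "t = w - r N"
    define a' where "a' = (\<lambda>k. t * a k + of_nat (Suc k) * a (Suc k))"
    define h where "h = (\<Prod>i<N. [:-r i, 1:])"
    have tK: "t \<notin> K" using W t_def by auto
    have dh: "degree h \<le> N"
    proof -
      have "degree h = (\<Sum>i<N. degree [:-r i, 1:])" unfolding h_def by (rule degree_prod_sum_eq) simp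
      thus ?thesis by simp
    qed
    have eq: "dval a (Suc N) (\<Prod>i<Suc N. [:-r i, 1:]) w = dval a' N h w"
    proof -
      have "(\<Prod>i<Suc N. [:-r i, 1:]) = [:-r N, 1:] * h" by (simp add: h_def mult.commute)
      thus ?thesis using dval_step[OF dh, of a "r N" w] by (simp add: a'_def t_def)
    qed
    have degP: "degree (Pa a (Suc N)) = Suc N" using degree_Pa[of a] a0 by blast
    have R': "\<forall>z. z \<notin> K \<longrightarrow> poly (Pa a' N) z \<noteq> 0"
    proof (intro allI impI)
      fix z assume zK: "z \<notin> K"
      have "of_nat (degree (Pa a (Suc N))) * poly (Pa a (Suc N)) z - (z - t) * poly (pderiv (Pa a (Suc N))) z \<noteq> 0"
        by (rule laguerre[OF K]) (use degP R zK tK in auto)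
      thus "poly (Pa a' N) z \<noteq> 0" unfolding a'_def polar_Pa degP by (simp add: left_diff_distrib)
    qed
    have a'0: "a' 0 \<noteq> 0"
    proof
      assume "a' 0 = 0"
      hence t1: "t * a 0 + a 1 = 0" by (simp add: a'_def)
      have R1: "\<forall>z. z \<notin> K \<longrightarrow> poly (Pa a 1) z \<noteq> 0"
        using GL_iter[of K a 1 N, OF K a0] R by simp
      have "poly (Pa a 1) t = 0" unfolding poly_Pa1 using t1 by (simp add: algebra_simps)
      thus False using R1 tK by blast
    qed
    have "dval a' N h w \<noteq> 0"
      using Suc.IH a'0 R' W unfolding h_def by auto
    thus "dval a (Suc N) (\<Prod>i<Suc N. [:-r i, 1:]) w \<noteq> 0" using eq by simp
  qed
qed

theorem mainTheorem8:
  fixes n :: nat and a :: "nat \<Rightarrow> complex" and \<Omega> :: "complex set"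
  assumes "n \<ge> 1"
    and "invertible_on_Pn (diffop a n) n"
    and "convex_circular_domain \<Omega>"
    and "Zset (diffop a n (phi n)) \<subseteq> \<Omega>"
  shows "\<forall>f \<in> Pn n. f \<noteq> 0 \<longrightarrow> Zset (diffop a n f) \<subseteq> setsum (Zset f) \<Omega>"
proof -
  have a0: "a 0 \<noteq> 0"
  proof
    assume A: "a 0 = 0"
    have d1: "diffop a n 1 = 0" unfolding diffop_def
    proof (intro sum.neutral ballI)
      fix k assume "k \<in> {..n}"
      show "smult (a k) ((pderiv ^^ k) 1) = 0"
      proof (cases k)
        case 0 thus ?thesis using A by simp
      next
        case (Suc k') thus ?thesis using higher_pderiv_deg0[of "1 :: complex poly" k] by simp
      qed
    qed
    have d0: "diffop a n 0 = 0" by (simp add: diffop_def)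
    have "inj_on (diffop a n) (Pn n)"
      using assms(2) unfolding invertible_on_Pn_def by (rule bij_betw_imp_inj_on)
    moreover have "1 \<in> Pn n" "0 \<in> Pn n" by (simp_all add: Pn_def)
    ultimately have "(1 :: complex poly) = 0" using d0 d1 by (metis inj_onD)
    thus False by simp
  qed
  have R: "\<forall>z. z \<notin> \<Omega> \<longrightarrow> poly (Pa a n) z \<noteq> 0"
    using assms(4) unfolding Zset_def diffop_phi by blast
  show ?thesis
  proof (intro ballI impI subsetI)
    fix f x assume f: "f \<in> Pn n" "f \<noteq> 0" and x: "x \<in> Zset (diffop a n f)"
    show "x \<in> setsum (Zset f) \<Omega>"
    proof (rule ccontr)
      assume nx: "x \<notin> setsum (Zset f) \<Omega>"
      have W: "x - u \<notin> \<Omega>" if "poly f u = 0" for u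
      proof
        assume "x - u \<in> \<Omega>"
        hence "x \<in> setsum (Zset f) \<Omega>" unfolding setsum_def Zset_def
          using that by (intro CollectI exI[of _ u] exI[of _ "x - u"]) simp
        thus False using nx by simp
      qed
      obtain r where r: "smult (lead_coeff f) (\<Prod>i<degree f. [:-r i, 1:]) = f"
        using complex_poly_decompose' by blast
      define m where "m = degree f"
      have mn: "m \<le> n" using f(1) unfolding Pn_def m_def by simp
      have lc: "lead_coeff f \<noteq> 0" using f(2) by simp
      have Wr: "\<forall>i<m. x - r i \<notin> \<Omega>"
      proof (intro allI impI)
        fix i assume "i < m"
        have "poly (\<Prod>i<m. [:-r i, 1:]) (r i) = 0"
          using \<open>i < m\<close> by (force simp: poly_prod prod_zero_iff)
        hence "poly f (r i) = 0" by (subst r[symmetric]) (simp add: m_def)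
        thus "x - r i \<notin> \<Omega>" by (rule W)
      qed
      have Rm: "\<forall>z. z \<notin> \<Omega> \<longrightarrow> poly (Pa a m) z \<noteq> 0"
        using GL_iter[of \<Omega> a m "n - m", OF assms(3) a0] R mn by simp
      have nz: "dval a m (\<Prod>i<m. [:-r i, 1:]) x \<noteq> 0"
        using walsh[OF assms(3), of m x r] a0 Rm Wr by blast
      have fe: "f = smult (lead_coeff f) (\<Prod>i<m. [:-r i, 1:])" using r unfolding m_def by simp
      have "dval a n f x = dval a m f x" by (rule dval_deg) (use mn m_def in auto)
      also have "\<dots> = lead_coeff f * dval a m (\<Prod>i<m. [:-r i, 1:]) x"
        by (subst fe) (rule dval_smult)
      finally have "dval a n f x \<noteq> 0" using lc nz by simp
      moreover have "dval a n f x = 0" using x unfolding Zset_def poly_diffop by simp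
      ultimately show False by simp
    qed
  qed
qed

end
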